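(* Let $\mathbb{A}$ be a medial algebra over a field of characteristic not $2,3$ and let $c$ be a nonzero idempotent with $\ker L_c=0$. Then the function $\phi(x)=\dfrac{\det L_x}{\det L_c}$ satisfies $\phi(xy)=\phi(x)\phi(y)$ for all $x,y\in\mathbb{A}$.
   Context: All algebras are commutative, possibly nonassociative, finite-dimensional. Medial: $(xy)(zw)=(xz)(yw)$ identically. $L_x:y\mapsto xy$. *)

theory Defs
  imports "HOL-Analysis.Analysis"
begin

text \<open>A finite-dimensional algebra over a field 'a is modelled on the coordinate space
  'a^'n (any finite-dimensional vector space is isomorphic to one of these) with a
  multiplication m.\<close>

definition comm_algebra :: "('a::field^'n \<Rightarrow> 'a^'n \<Rightarrow> 'a^'n) \<Rightarrow> bool" where
  "comm_algebra m \<longleftrightarrow>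
     (\<forall>x y. m x y = m y x) \<and>
     (\<forall>x y z. m (x + y) z = m x z + m y z) \<and>
     (\<forall>c x y. m (c *s x) y = c *s m x y)"

definition medial :: "('a^'n \<Rightarrow> 'a^'n \<Rightarrow> 'a^'n) \<Rightarrow> bool" where
  "medial m \<longleftrightarrow> (\<forall>x y z w. m (m x y) (m z w) = m (m x z) (m y w))"

definition Lop :: "('a^'n \<Rightarrow> 'a^'n \<Rightarrow> 'a^'n) \<Rightarrow> 'a^'n \<Rightarrow> 'a^'n \<Rightarrow> 'a^'n" where
  "Lop m x = (\<lambda>y. m x y)"

definition detL :: "('a::field^'n \<Rightarrow> 'a^'n \<Rightarrow> 'a^'n) \<Rightarrow> 'a^'n \<Rightarrow> 'a" where
  "detL m x = det (matrix (Lop m x))"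

end

theory Submission
  imports Defs
begin

lemma Lop_linear:
  assumes "comm_algebra m"
  shows "Vector_Spaces.linear (*s) (*s) (Lop m x)"
proof -
  have c: "\<And>x y. m x y = m y x" and a: "\<And>x y z. m (x + y) z = m x z + m y z"
    and s: "\<And>c x y. m (c *s x) y = c *s m x y" using assms unfolding comm_algebra_def by auto
  show ?thesis
    unfolding Vector_Spaces.linear_iff Lop_def
    using vec.vector_space_axioms by (metis a c s)
qed

lemma detL_comp:
  assumes "comm_algebra m" and "\<And>w. m a (m b w) = m c (m d w)"
  shows "detL m a * detL m b = detL m c * detL m d"
proof -
  have "Lop m a \<circ> Lop m b = Lop m c \<circ> Lop m d"
    using assms(2) by (auto simp: Lop_def)
  then have "matrix (Lop m a) ** matrix (Lop m b) = matrix (Lop m c) ** matrix (Lop m d)"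
    by (metis matrix_compose_gen Lop_linear assms(1))
  then show ?thesis unfolding detL_def by (metis det_mul)
qed

theorem theorem3p10:
  fixes m :: "'a::field^'n \<Rightarrow> 'a^'n \<Rightarrow> 'a^'n" and c :: "'a^'n"
  assumes "comm_algebra m" and "medial m"
    and "(2::'a) \<noteq> 0" and "(3::'a) \<noteq> 0"
    and "c \<noteq> 0" and "m c c = c"
    and "\<forall>x. m c x = 0 \<longrightarrow> x = 0"
  shows "\<forall>x y. detL m (m x y) / detL m c = (detL m x / detL m c) * (detL m y / detL m c)"
proof (intro allI)
  fix x y
  have com: "\<And>x y. m x y = m y x" using assms(1) unfolding comm_algebra_def by auto
  have med: "\<And>x y z w. m (m x y) (m z w) = m (m x z) (m y w)" using assms(2) unfolding medial_def by auto
  have e1: "detL m (m x y) * detL m c = detL m (m x c) * detL m y"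
    by (rule detL_comp[OF assms(1)]) (simp add: med)
  have e2: "detL m c * detL m x = detL m (m c x) * detL m c"
    by (rule detL_comp[OF assms(1)]) (metis med assms(6))
  show "detL m (m x y) / detL m c = (detL m x / detL m c) * (detL m y / detL m c)"
  proof (cases "detL m c = 0")
    case True then show ?thesis by simp
  next
    case False
    then have "detL m (m c x) = detL m x" using e2 by (simp add: mult.commute)
    then have "detL m (m x y) * detL m c = detL m x * detL m y" using e1 com by metis
    then show ?thesis using False by (simp add: field_simps)
  qed
qed

end
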